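(* Let $S$ and $T$ be two distinct finite symmetric generating sets of the finitely generated group $G$. Then, for any action $\Phi$ of $G$ on $X$ and any Borel measure $\mu$ on $X$: (i) $\Phi$ has shadowing with respect to $S$ if and only if it has shadowing with respect to $T$. (ii) $\Phi$ is topologically stable with respect to $S$ if and only if it is topologically stable with respect to $T$. (iii) $\Phi$ is persistent with respect to $S$ if and only if it is persistent with respect to $T$. (iv) $\Phi$ has $\mu$-shadowing with respect to $S$ if and only if it has $\mu$-shadowing with respect to $T$. (v) $\Phi$ is $\mu$-topologically stable with respect to $S$ if and only if it is $\mu$-topologically stable with respect to $T$. (vi) $\Phi$ is $\mu$-persistent with respect to $S$ if and only if it is $\mu$-persistent with respect to $T$.
   Context: $G$ is a finitely generated group and $(X,\mathcal{U})$ is a uniform space with uniformity $\mathcal{U}$ (whose members are called entourages). For $U,V\subset X\times X$, $U\circ V=\{(x,y)\mid \exists z,\ (x,z)\in U,(z,y)\in V\}$, and $D[x]=\{y\mid (x,y)\in D\}$. An action of $G$ on $X$ is a map $\Phi:G\times X\to X$ such that each $\Phi_g=\Phi(g,\cdot)$ is a uniform equivalence, $\Phi_e=\mathrm{id}$, and $\Phi_{g_1g_2}=\Phi_{g_1}\circ\Phi_{g_2}$; $Act(G,X)$ denotes the set of such actions. Generating sets are finite and symmetric. For a generating set $S$ and $D\in\mathcal{U}$: $\{x_g\}_{g\in G}$ is a $D$-pseudo orbit (w.r.t. $S$) if $(x_{sg},\Phi_s(x_g))\in D$ for all $s\in S$, $g\in G$; it is $E$-shadowed by $x$ if $(x_g,\Phi_g(x))\in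 E$ for all $g\in G$; it is through a set $B$ if $x_e\in B$. With respect to $S$: - $\Phi$ has shadowing if for every $E\in\mathcal{U}$ there is $D\in\mathcal{U}$ such that every $D$-pseudo orbit is $E$-shadowed by some point. - $\Phi$ is topologically stable if for every $E\in\mathcal{U}$ there is $D\in\mathcal{U}$ such that whenever $\Psi\in Act(G,X)$ satisfies $(\Psi_s(x),\Phi_s(x))\in D$ for all $x\in X$, $s\in S$, there is a continuous $f:X\to X$ with $\Phi_g\circ f=f\circ\Psi_g$ for all $g$ and $(x,f(x))\in E$ for all $x$. - $\Phi$ is persistent if for every $E$ there is $D$ such that for every such $\Psi$ and every $x\in X$ there is $y$ with $(\Psi_g(x),\Phi_g(y))\in E$ for all $g\in G$. - $\Phi$ has $\mu$-shadowing if for every $E$ there are $D$ and a measurable $B$ with $\mu(X\setminus B)=0$ such that every $D$-pseudo orbit through $B$ is $E$-shadowed by some point. - $\Phi$ is $\mu$-topologically stable if for every $E$ there is $D$ such that for every such $\Psi$ there is an upper semi-continuous compact-valued set-valued map $H:X\to\mathcal{P}(X)$ with measurable domain $Dom(H)=\{x\mid H(x)\neq\emptyset\}$ satisfying $\mu(X\setminus Dom(H))=0$, $\mu(H(x))=0$ for all $x$, $H(x)\subset E[x]$ for all $x$, and $\Phi_g\circ H=H\circ\Psi_g$ for all $g\in G$. ($H$ is upper semi-continuous if for every $x\in Dom(H)$ and open $O\supset H(x)$ there is $D'\in\mathcal{U}$ with $H(y)\subset O$ whenever $(x,y)\in D'$.) - $\Phi$ is $\mu$-persistent if for every $E$ there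 are $D$ and a measurable $B$ with $\mu(X\setminus B)=0$ such that for every such $\Psi$ and every $x\in B$ there is $y$ with $(\Psi_g(x),\Phi_g(y))\in E$ for all $g\in G$. *)

theory Defs
  imports "HOL-Analysis.Analysis" "HOL-Algebra.Generated_Groups"
begin

(* X is the whole type 'a of class uniform_space; its uniformity is the filter
   uniformity, and the entourages are the members of that filter. *)
definition entourage :: "('a::uniform_space \<times> 'a) set \<Rightarrow> bool" where
  "entourage E \<longleftrightarrow> eventually (\<lambda>p. p \<in> E) uniformity"

definition uniform_equivalence :: "('a::uniform_space \<Rightarrow> 'a) \<Rightarrow> bool" where
  "uniform_equivalence f \<longleftrightarrow> bij f \<and> uniformly_continuous_on UNIV f
      \<and> uniformly_continuous_on UNIV (inv_into UNIV f)"

definition is_action :: "('g, 'b) monoid_scheme \<Rightarrow> ('g \<Rightarrow> 'a::uniform_space \<Rightarrow> 'a) \<Rightarrow> bool" where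
  "is_action G \<Phi> \<longleftrightarrow> (\<forall>g\<in>carrier G. uniform_equivalence (\<Phi> g))
     \<and> \<Phi> \<one>\<^bsub>G\<^esub> = id
     \<and> (\<forall>g1\<in>carrier G. \<forall>g2\<in>carrier G. \<Phi> (g1 \<otimes>\<^bsub>G\<^esub> g2) = \<Phi> g1 \<circ> \<Phi> g2)"

definition gen_set :: "('g, 'b) monoid_scheme \<Rightarrow> 'g set \<Rightarrow> bool" where
  "gen_set G S \<longleftrightarrow> finite S \<and> S \<subseteq> carrier G \<and> (\<forall>s\<in>S. inv\<^bsub>G\<^esub> s \<in> S)
     \<and> generate G S = carrier G"

definition pseudo_orbit :: "('g, 'b) monoid_scheme \<Rightarrow> 'g set \<Rightarrow> ('g \<Rightarrow> 'a \<Rightarrow> 'a)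
     \<Rightarrow> ('a \<times> 'a) set \<Rightarrow> ('g \<Rightarrow> 'a) \<Rightarrow> bool" where
  "pseudo_orbit G S \<Phi> D xs \<longleftrightarrow>
     (\<forall>s\<in>S. \<forall>g\<in>carrier G. (xs (s \<otimes>\<^bsub>G\<^esub> g), \<Phi> s (xs g)) \<in> D)"

definition shadowed :: "('g, 'b) monoid_scheme \<Rightarrow> ('g \<Rightarrow> 'a \<Rightarrow> 'a)
     \<Rightarrow> ('a \<times> 'a) set \<Rightarrow> ('g \<Rightarrow> 'a) \<Rightarrow> 'a \<Rightarrow> bool" where
  "shadowed G \<Phi> E xs x \<longleftrightarrow> (\<forall>g\<in>carrier G. (xs g, \<Phi> g x) \<in> E)"

definition close_action :: "'g set \<Rightarrow> ('g \<Rightarrow> 'a \<Rightarrow> 'a) \<Rightarrow> ('g \<Rightarrow> 'a \<Rightarrow> 'a)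
     \<Rightarrow> ('a \<times> 'a) set \<Rightarrow> bool" where
  "close_action S \<Phi> \<Psi> D \<longleftrightarrow> (\<forall>x. \<forall>s\<in>S. (\<Psi> s x, \<Phi> s x) \<in> D)"

definition has_shadowing ::
  "('g, 'b) monoid_scheme \<Rightarrow> 'g set \<Rightarrow> ('g \<Rightarrow> 'a::uniform_space \<Rightarrow> 'a) \<Rightarrow> bool" where
  "has_shadowing G S \<Phi> \<longleftrightarrow> (\<forall>E. entourage E \<longrightarrow> (\<exists>D. entourage D \<and>
     (\<forall>xs. pseudo_orbit G S \<Phi> D xs \<longrightarrow> (\<exists>x. shadowed G \<Phi> E xs x))))"

definition top_stable ::
  "('g, 'b) monoid_scheme \<Rightarrow> 'g set \<Rightarrow> ('g \<Rightarrow> 'a::uniform_space \<Rightarrow> 'a) \<Rightarrow> bool" where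
  "top_stable G S \<Phi> \<longleftrightarrow> (\<forall>E. entourage E \<longrightarrow> (\<exists>D. entourage D \<and>
     (\<forall>\<Psi>. is_action G \<Psi> \<and> close_action S \<Phi> \<Psi> D \<longrightarrow>
        (\<exists>f. continuous_on UNIV f \<and> (\<forall>g\<in>carrier G. \<Phi> g \<circ> f = f \<circ> \<Psi> g)
             \<and> (\<forall>x. (x, f x) \<in> E)))))"

definition persistent ::
  "('g, 'b) monoid_scheme \<Rightarrow> 'g set \<Rightarrow> ('g \<Rightarrow> 'a::uniform_space \<Rightarrow> 'a) \<Rightarrow> bool" where
  "persistent G S \<Phi> \<longleftrightarrow> (\<forall>E. entourage E \<longrightarrow> (\<exists>D. entourage D \<and>
     (\<forall>\<Psi>. is_action G \<Psi> \<and> close_action S \<Phi> \<Psi> D \<longrightarrow>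
        (\<forall>x. \<exists>y. \<forall>g\<in>carrier G. (\<Psi> g x, \<Phi> g y) \<in> E))))"

definition mu_shadowing ::
  "('g, 'b) monoid_scheme \<Rightarrow> 'g set \<Rightarrow> 'a measure \<Rightarrow> ('g \<Rightarrow> 'a::uniform_space \<Rightarrow> 'a) \<Rightarrow> bool" where
  "mu_shadowing G S \<mu> \<Phi> \<longleftrightarrow> (\<forall>E. entourage E \<longrightarrow> (\<exists>D B. entourage D \<and>
     B \<in> sets \<mu> \<and> emeasure \<mu> (UNIV - B) = 0 \<and>
     (\<forall>xs. pseudo_orbit G S \<Phi> D xs \<and> xs \<one>\<^bsub>G\<^esub> \<in> B \<longrightarrow> (\<exists>x. shadowed G \<Phi> E xs x))))"

definition dom_sv :: "('a \<Rightarrow> 'a set) \<Rightarrow> 'a set" where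
  "dom_sv H = {x. H x \<noteq> {}}"

definition usc :: "('a::uniform_space \<Rightarrow> 'a set) \<Rightarrow> bool" where
  "usc H \<longleftrightarrow> (\<forall>x\<in>dom_sv H. \<forall>U. open U \<and> H x \<subseteq> U \<longrightarrow>
      (\<exists>D'. entourage D' \<and> (\<forall>y. (x, y) \<in> D' \<longrightarrow> H y \<subseteq> U)))"

definition mu_top_stable ::
  "('g, 'b) monoid_scheme \<Rightarrow> 'g set \<Rightarrow> 'a measure \<Rightarrow> ('g \<Rightarrow> 'a::uniform_space \<Rightarrow> 'a) \<Rightarrow> bool" where
  "mu_top_stable G S \<mu> \<Phi> \<longleftrightarrow> (\<forall>E. entourage E \<longrightarrow> (\<exists>D. entourage D \<and>
     (\<forall>\<Psi>. is_action G \<Psi> \<and> close_action S \<Phi> \<Psi> D \<longrightarrow>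
        (\<exists>H. usc H \<and> (\<forall>x. compact (H x)) \<and> dom_sv H \<in> sets \<mu>
             \<and> emeasure \<mu> (UNIV - dom_sv H) = 0
             \<and> (\<forall>x. emeasure \<mu> (H x) = 0)
             \<and> (\<forall>x. H x \<subseteq> E `` {x})
             \<and> (\<forall>g\<in>carrier G. \<forall>x. \<Phi> g ` H x = H (\<Psi> g x))))))"

definition mu_persistent ::
  "('g, 'b) monoid_scheme \<Rightarrow> 'g set \<Rightarrow> 'a measure \<Rightarrow> ('g \<Rightarrow> 'a::uniform_space \<Rightarrow> 'a) \<Rightarrow> bool" where
  "mu_persistent G S \<mu> \<Phi> \<longleftrightarrow> (\<forall>E. entourage E \<longrightarrow> (\<exists>D B. entourage D \<and>
     B \<in> sets \<mu> \<and> emeasure \<mu> (UNIV - B) = 0 \<and>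
     (\<forall>\<Psi>. is_action G \<Psi> \<and> close_action S \<Phi> \<Psi> D \<longrightarrow>
        (\<forall>x\<in>B. \<exists>y. \<forall>g\<in>carrier G. (\<Psi> g x, \<Phi> g y) \<in> E))))"

end

theory Submission
  imports Defs
begin

lemma ent_refl: "entourage D \<Longrightarrow> (x, x) \<in> D"
  unfolding entourage_def using uniformity_refl[of "\<lambda>p. p \<in> D"] by simp

lemma ent_Int: "entourage A \<Longrightarrow> entourage B \<Longrightarrow> entourage (A \<inter> B)"
  unfolding entourage_def by (simp add: eventually_conj)

lemma ent_trans:
  assumes "entourage D"
  shows "\<exists>D1. entourage D1 \<and> (\<forall>x y z. (x,y)\<in>D1 \<longrightarrow> (y,z)\<in>D1 \<longrightarrow> (x,z)\<in>D)"
proof -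
  from uniformity_trans[of "\<lambda>p. p \<in> D"] assms obtain P where
    "eventually P uniformity" "\<forall>x y z. P (x, y) \<longrightarrow> P (y, z) \<longrightarrow> (x, z) \<in> D"
    unfolding entourage_def by auto
  then show ?thesis unfolding entourage_def
    by (intro exI[of _ "{p. P p}"]) auto
qed

lemma ent_uc:
  assumes "uniform_equivalence f" "entourage D"
  shows "\<exists>D'. entourage D' \<and> (\<forall>a b. (a,b)\<in>D' \<longrightarrow> (f a, f b) \<in> D)"
proof -
  have "uniformly_continuous_on UNIV f" using assms(1) unfolding uniform_equivalence_def by simp
  from uniformly_continuous_onD[OF this, of "\<lambda>p. p \<in> D"] assms(2)
  have "eventually (\<lambda>(x, y). (f x, f y) \<in> D) uniformity"
    unfolding entourage_def by simp
  then show ?thesis unfolding entourage_def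
    by (intro exI[of _ "{(x,y). (f x, f y) \<in> D}"]) (auto simp: case_prod_unfold)
qed

lemma ent_finite:
  assumes "finite S" "\<forall>s\<in>S. entourage (F s)"
  shows "entourage (\<Inter>s\<in>S. F s)"
proof -
  have "eventually (\<lambda>p. \<forall>s\<in>S. p \<in> F s) uniformity"
    using assms unfolding entourage_def by (intro eventually_ball_finite) auto
  then show ?thesis unfolding entourage_def by simp
qed

lemma key_gen:
  fixes G :: "('g, 'b) monoid_scheme" and \<Phi> :: "'g \<Rightarrow> 'a::uniform_space \<Rightarrow> 'a"
  assumes G: "group G" and T: "gen_set G T" and act: "is_action G \<Phi>"
    and h: "h \<in> generate G T"
  shows "\<forall>D. entourage D \<longrightarrow> (\<exists>D'. entourage D' \<and>
     (\<forall>xs. pseudo_orbit G T \<Phi> D' xs \<longrightarrow> (\<forall>g\<in>carrier G. (xs (h \<otimes>\<^bsub>G\<^esub> g), \<Phi> h (xs g)) \<in> D))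
   \<and> (\<forall>\<Psi>. is_action G \<Psi> \<and> close_action T \<Phi> \<Psi> D' \<longrightarrow> (\<forall>x. (\<Psi> h x, \<Phi> h x) \<in> D)))"
  using h
proof (induction h rule: generate.induct)
  case one
  have "\<Phi> \<one>\<^bsub>G\<^esub> = id" using act unfolding is_action_def by simp
  then show ?case
    using G by (auto simp: is_action_def ent_refl group.is_monoid monoid.l_one intro!: exI[of _ UNIV] simp: entourage_def)
next
  case (incl h)
  then show ?case using T G
    by (auto simp: pseudo_orbit_def close_action_def gen_set_def)
next
  case (inv h)
  then have "inv\<^bsub>G\<^esub> h \<in> T" using T by (auto simp: gen_set_def)
  then show ?case
    by (auto simp: pseudo_orbit_def close_action_def)
next
  case (eng h1 h2)
  have c1: "h1 \<in> carrier G" and c2: "h2 \<in> carrier G"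
    using eng.hyps T G by (auto simp: gen_set_def)
  show ?case
  proof (intro allI impI)
    fix D :: "('a \<times> 'a) set" assume D: "entourage D"
    obtain D1 where D1: "entourage D1" "\<forall>x y z. (x,y)\<in>D1 \<longrightarrow> (y,z)\<in>D1 \<longrightarrow> (x,z)\<in>D"
      using ent_trans[OF D] by blast
    have ue: "uniform_equivalence (\<Phi> h1)" using act c1 unfolding is_action_def by simp
    obtain D2 where D2: "entourage D2" "\<forall>a b. (a,b)\<in>D2 \<longrightarrow> (\<Phi> h1 a, \<Phi> h1 b) \<in> D1"
      using ent_uc[OF ue D1(1)] by blast
    obtain A where A: "entourage A"
      "\<forall>xs. pseudo_orbit G T \<Phi> A xs \<longrightarrow> (\<forall>g\<in>carrier G. (xs (h1 \<otimes>\<^bsub>G\<^esub> g), \<Phi> h1 (xs g)) \<in> D1)"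
      "\<forall>\<Psi>. is_action G \<Psi> \<and> close_action T \<Phi> \<Psi> A \<longrightarrow> (\<forall>x. (\<Psi> h1 x, \<Phi> h1 x) \<in> D1)"
      using eng.IH(1) D1(1) by blast
    obtain B where B: "entourage B"
      "\<forall>xs. pseudo_orbit G T \<Phi> B xs \<longrightarrow> (\<forall>g\<in>carrier G. (xs (h2 \<otimes>\<^bsub>G\<^esub> g), \<Phi> h2 (xs g)) \<in> D2)"
      "\<forall>\<Psi>. is_action G \<Psi> \<and> close_action T \<Phi> \<Psi> B \<longrightarrow> (\<forall>x. (\<Psi> h2 x, \<Phi> h2 x) \<in> D2)"
      using eng.IH(2) D2(1) by blast
    have monoA: "pseudo_orbit G T \<Phi> (A \<inter> B) xs \<Longrightarrow> pseudo_orbit G T \<Phi> A xs \<and> pseudo_orbit G T \<Phi> B xs" for xs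
      by (auto simp: pseudo_orbit_def)
    have monoC: "close_action T \<Phi> \<Psi> (A \<inter> B) \<Longrightarrow> close_action T \<Phi> \<Psi> A \<and> close_action T \<Phi> \<Psi> B" for \<Psi>
      by (auto simp: close_action_def)
    show "\<exists>D'. entourage D' \<and>
     (\<forall>xs. pseudo_orbit G T \<Phi> D' xs \<longrightarrow> (\<forall>g\<in>carrier G. (xs ((h1 \<otimes>\<^bsub>G\<^esub> h2) \<otimes>\<^bsub>G\<^esub> g), \<Phi> (h1 \<otimes>\<^bsub>G\<^esub> h2) (xs g)) \<in> D))
   \<and> (\<forall>\<Psi>. is_action G \<Psi> \<and> close_action T \<Phi> \<Psi> D' \<longrightarrow> (\<forall>x. (\<Psi> (h1 \<otimes>\<^bsub>G\<^esub> h2) x, \<Phi> (h1 \<otimes>\<^bsub>G\<^esub> h2) x) \<in> D))"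
    proof (intro exI[of _ "A \<inter> B"] conjI allI impI ballI)
      show "entourage (A \<inter> B)" using A(1) B(1) by (rule ent_Int)
    next
      fix xs g assume po: "pseudo_orbit G T \<Phi> (A \<inter> B) xs" and g: "g \<in> carrier G"
      have hg: "h2 \<otimes>\<^bsub>G\<^esub> g \<in> carrier G" using G c2 g by (simp add: group.is_monoid monoid.m_closed)
      have e1: "(xs (h1 \<otimes>\<^bsub>G\<^esub> (h2 \<otimes>\<^bsub>G\<^esub> g)), \<Phi> h1 (xs (h2 \<otimes>\<^bsub>G\<^esub> g))) \<in> D1"
        using A(2) monoA[OF po] hg by blast
      have e2: "(\<Phi> h1 (xs (h2 \<otimes>\<^bsub>G\<^esub> g)), \<Phi> h1 (\<Phi> h2 (xs g))) \<in> D1"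
        using D2(2) B(2) monoA[OF po] g by blast
      have "(h1 \<otimes>\<^bsub>G\<^esub> h2) \<otimes>\<^bsub>G\<^esub> g = h1 \<otimes>\<^bsub>G\<^esub> (h2 \<otimes>\<^bsub>G\<^esub> g)"
        using G c1 c2 g by (simp add: group.is_monoid monoid.m_assoc)
      moreover have "\<Phi> (h1 \<otimes>\<^bsub>G\<^esub> h2) = \<Phi> h1 \<circ> \<Phi> h2" using act c1 c2 unfolding is_action_def by simp
      ultimately show "(xs ((h1 \<otimes>\<^bsub>G\<^esub> h2) \<otimes>\<^bsub>G\<^esub> g), \<Phi> (h1 \<otimes>\<^bsub>G\<^esub> h2) (xs g)) \<in> D"
        using D1(2) e1 e2 by auto
    next
      fix \<Psi> x assume pc: "is_action G \<Psi> \<and> close_action T \<Phi> \<Psi> (A \<inter> B)"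
      have e1: "(\<Psi> h1 (\<Psi> h2 x), \<Phi> h1 (\<Psi> h2 x)) \<in> D1" using A(3) pc monoC by blast
      have e2: "(\<Phi> h1 (\<Psi> h2 x), \<Phi> h1 (\<Phi> h2 x)) \<in> D1" using D2(2) B(3) pc monoC by blast
      have "\<Phi> (h1 \<otimes>\<^bsub>G\<^esub> h2) = \<Phi> h1 \<circ> \<Phi> h2" using act c1 c2 unfolding is_action_def by simp
      moreover have "\<Psi> (h1 \<otimes>\<^bsub>G\<^esub> h2) = \<Psi> h1 \<circ> \<Psi> h2" using pc c1 c2 unfolding is_action_def by simp
      ultimately show "(\<Psi> (h1 \<otimes>\<^bsub>G\<^esub> h2) x, \<Phi> (h1 \<otimes>\<^bsub>G\<^esub> h2) x) \<in> D"
        using D1(2) e1 e2 by auto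
    qed
  qed
qed


lemma reduce:
  fixes G :: "('g, 'b) monoid_scheme" and \<Phi> :: "'g \<Rightarrow> 'a::uniform_space \<Rightarrow> 'a"
  assumes G: "group G" and S: "gen_set G S" and T: "gen_set G T" and act: "is_action G \<Phi>"
    and D: "entourage D"
  shows "\<exists>D'. entourage D' \<and> (\<forall>xs. pseudo_orbit G T \<Phi> D' xs \<longrightarrow> pseudo_orbit G S \<Phi> D xs)
     \<and> (\<forall>\<Psi>. is_action G \<Psi> \<and> close_action T \<Phi> \<Psi> D' \<longrightarrow> close_action S \<Phi> \<Psi> D)"
proof -
  have "\<forall>s\<in>S. \<exists>D'. entourage D' \<and>
     (\<forall>xs. pseudo_orbit G T \<Phi> D' xs \<longrightarrow> (\<forall>g\<in>carrier G. (xs (s \<otimes>\<^bsub>G\<^esub> g), \<Phi> s (xs g)) \<in> D))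
   \<and> (\<forall>\<Psi>. is_action G \<Psi> \<and> close_action T \<Phi> \<Psi> D' \<longrightarrow> (\<forall>x. (\<Psi> s x, \<Phi> s x) \<in> D))"
  proof
    fix s assume "s \<in> S"
    then have "s \<in> generate G T" using S T by (auto simp: gen_set_def)
    note gs = this
    show "\<exists>D'. entourage D' \<and>
     (\<forall>xs. pseudo_orbit G T \<Phi> D' xs \<longrightarrow> (\<forall>g\<in>carrier G. (xs (s \<otimes>\<^bsub>G\<^esub> g), \<Phi> s (xs g)) \<in> D))
   \<and> (\<forall>\<Psi>. is_action G \<Psi> \<and> close_action T \<Phi> \<Psi> D' \<longrightarrow> (\<forall>x. (\<Psi> s x, \<Phi> s x) \<in> D))"
      by (rule mp[OF spec[OF key_gen[OF G T act gs]] D])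
  qed
  note ch = this
  from bchoice[OF ch] obtain F where F: "\<forall>s\<in>S. entourage (F s) \<and>
     (\<forall>xs. pseudo_orbit G T \<Phi> (F s) xs \<longrightarrow> (\<forall>g\<in>carrier G. (xs (s \<otimes>\<^bsub>G\<^esub> g), \<Phi> s (xs g)) \<in> D))
   \<and> (\<forall>\<Psi>. is_action G \<Psi> \<and> close_action T \<Phi> \<Psi> (F s) \<longrightarrow> (\<forall>x. (\<Psi> s x, \<Phi> s x) \<in> D))"
    ..
  have fin: "finite S" using S by (simp add: gen_set_def)
  show ?thesis
  proof (intro exI[of _ "\<Inter>s\<in>S. F s"] conjI allI impI)
    show "entourage (\<Inter>s\<in>S. F s)" using ent_finite[OF fin] F by blast
  next
    fix xs assume po: "pseudo_orbit G T \<Phi> (\<Inter>s\<in>S. F s) xs"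
    have h: "pseudo_orbit G T \<Phi> (F s) xs" if "s \<in> S" for s
      using po that by (auto simp: pseudo_orbit_def)
    show "pseudo_orbit G S \<Phi> D xs" unfolding pseudo_orbit_def
    proof (intro ballI)
      fix s g assume s: "s \<in> S" and g: "g \<in> carrier G"
      have "\<forall>xs. pseudo_orbit G T \<Phi> (F s) xs \<longrightarrow> (\<forall>g\<in>carrier G. (xs (s \<otimes>\<^bsub>G\<^esub> g), \<Phi> s (xs g)) \<in> D)"
        using F s by blast
      then show "(xs (s \<otimes>\<^bsub>G\<^esub> g), \<Phi> s (xs g)) \<in> D" using h[OF s] g by blast
    qed
  next
    fix \<Psi> assume pc: "is_action G \<Psi> \<and> close_action T \<Phi> \<Psi> (\<Inter>s\<in>S. F s)"
    have h: "close_action T \<Phi> \<Psi> (F s)" if "s \<in> S" for s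
      using pc that by (auto simp: close_action_def)
    show "close_action S \<Phi> \<Psi> D" unfolding close_action_def
    proof (intro allI ballI)
      fix x s assume s: "s \<in> S"
      have "\<forall>\<Psi>. is_action G \<Psi> \<and> close_action T \<Phi> \<Psi> (F s) \<longrightarrow> (\<forall>x. (\<Psi> s x, \<Phi> s x) \<in> D)"
        using F s by blast
      then show "(\<Psi> s x, \<Phi> s x) \<in> D" using h[OF s] pc by blast
    qed
  qed
qed

lemma mh1: "\<forall>x. P x \<longrightarrow> R x \<Longrightarrow> \<forall>x. R x \<longrightarrow> Q x \<Longrightarrow> \<forall>x. P x \<longrightarrow> Q x"
  by blast

lemma mh2: "\<forall>x. P x \<longrightarrow> R x \<Longrightarrow> \<forall>x. R x \<and> C x \<longrightarrow> Q x \<Longrightarrow> \<forall>x. P x \<and> C x \<longrightarrow> Q x"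
  by blast

lemma mh3: "\<forall>x. A x \<and> P x \<longrightarrow> R x \<Longrightarrow> \<forall>x. A x \<and> R x \<longrightarrow> Q x \<Longrightarrow> \<forall>x. A x \<and> P x \<longrightarrow> Q x"
  by blast

lemma one_dir:
  fixes G :: "('g, 'b) monoid_scheme" and \<Phi> :: "'g \<Rightarrow> 'a::uniform_space \<Rightarrow> 'a"
    and \<mu> :: "'a measure"
  assumes G: "group G" and S: "gen_set G S" and T: "gen_set G T" and act: "is_action G \<Phi>"
  shows "(has_shadowing G S \<Phi> \<longrightarrow> has_shadowing G T \<Phi>)
       \<and> (top_stable G S \<Phi> \<longrightarrow> top_stable G T \<Phi>)
       \<and> (persistent G S \<Phi> \<longrightarrow> persistent G T \<Phi>)
       \<and> (mu_shadowing G S \<mu> \<Phi> \<longrightarrow> mu_shadowing G T \<mu> \<Phi>)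
       \<and> (mu_top_stable G S \<mu> \<Phi> \<longrightarrow> mu_top_stable G T \<mu> \<Phi>)
       \<and> (mu_persistent G S \<mu> \<Phi> \<longrightarrow> mu_persistent G T \<mu> \<Phi>)"
proof -
  note R = reduce[OF G S T act]
  have 1: "has_shadowing G S \<Phi> \<longrightarrow> has_shadowing G T \<Phi>"
    unfolding has_shadowing_def
  proof (rule impI, rule allI)
    fix E :: "('a \<times> 'a) set"
    assume H: "\<forall>E. entourage E \<longrightarrow> (\<exists>D. entourage D \<and> (\<forall>xs. pseudo_orbit G S \<Phi> D xs \<longrightarrow> (\<exists>x. shadowed G \<Phi> E xs x)))"
    show "entourage E \<longrightarrow> (\<exists>D. entourage D \<and> (\<forall>xs. pseudo_orbit G T \<Phi> D xs \<longrightarrow> (\<exists>x. shadowed G \<Phi> E xs x)))"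
    proof
      assume "entourage E"
      then obtain D where D: "entourage D" "\<forall>xs. pseudo_orbit G S \<Phi> D xs \<longrightarrow> (\<exists>x. shadowed G \<Phi> E xs x)"
        using H[rule_format, OF \<open>entourage E\<close>] by (elim exE conjE) (rule that, assumption+)
      obtain D' where D': "entourage D'" "\<forall>xs. pseudo_orbit G T \<Phi> D' xs \<longrightarrow> pseudo_orbit G S \<Phi> D xs" "\<forall>\<Psi>. is_action G \<Psi> \<and> close_action T \<Phi> \<Psi> D' \<longrightarrow> close_action S \<Phi> \<Psi> D"
        using R[OF D(1)] by blast
      show "\<exists>D. entourage D \<and> (\<forall>xs. pseudo_orbit G T \<Phi> D xs \<longrightarrow> (\<exists>x. shadowed G \<Phi> E xs x))"
        using D'(1) mh1[OF D'(2) D(2)] by blast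
    qed
  qed
  have 2: "top_stable G S \<Phi> \<longrightarrow> top_stable G T \<Phi>"
    unfolding top_stable_def
  proof (rule impI, rule allI)
    fix E :: "('a \<times> 'a) set"
    assume H: "\<forall>E. entourage E \<longrightarrow> (\<exists>D. entourage D \<and>
     (\<forall>\<Psi>. is_action G \<Psi> \<and> close_action S \<Phi> \<Psi> D \<longrightarrow>
        (\<exists>f. continuous_on UNIV f \<and> (\<forall>g\<in>carrier G. \<Phi> g \<circ> f = f \<circ> \<Psi> g)
             \<and> (\<forall>x. (x, f x) \<in> E))))"
    show "entourage E \<longrightarrow> (\<exists>D. entourage D \<and>
     (\<forall>\<Psi>. is_action G \<Psi> \<and> close_action T \<Phi> \<Psi> D \<longrightarrow>
        (\<exists>f. continuous_on UNIV f \<and> (\<forall>g\<in>carrier G. \<Phi> g \<circ> f = f \<circ> \<Psi> g)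
             \<and> (\<forall>x. (x, f x) \<in> E))))"
    proof
      assume "entourage E"
      then obtain D where D: "entourage D" "\<forall>\<Psi>. is_action G \<Psi> \<and> close_action S \<Phi> \<Psi> D \<longrightarrow>
        (\<exists>f. continuous_on UNIV f \<and> (\<forall>g\<in>carrier G. \<Phi> g \<circ> f = f \<circ> \<Psi> g)
             \<and> (\<forall>x. (x, f x) \<in> E))"
        using H[rule_format, OF \<open>entourage E\<close>] by (elim exE conjE) (rule that, assumption+)
      obtain D' where D': "entourage D'" "\<forall>xs. pseudo_orbit G T \<Phi> D' xs \<longrightarrow> pseudo_orbit G S \<Phi> D xs" "\<forall>\<Psi>. is_action G \<Psi> \<and> close_action T \<Phi> \<Psi> D' \<longrightarrow> close_action S \<Phi> \<Psi> D"
        using R[OF D(1)] by blast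
      show "\<exists>D. entourage D \<and>
     (\<forall>\<Psi>. is_action G \<Psi> \<and> close_action T \<Phi> \<Psi> D \<longrightarrow>
        (\<exists>f. continuous_on UNIV f \<and> (\<forall>g\<in>carrier G. \<Phi> g \<circ> f = f \<circ> \<Psi> g)
             \<and> (\<forall>x. (x, f x) \<in> E)))"
        using D'(1) mh3[OF D'(3) D(2)] by blast
    qed
  qed
  have 3: "persistent G S \<Phi> \<longrightarrow> persistent G T \<Phi>"
    unfolding persistent_def
  proof (rule impI, rule allI)
    fix E :: "('a \<times> 'a) set"
    assume H: "\<forall>E. entourage E \<longrightarrow> (\<exists>D. entourage D \<and>
     (\<forall>\<Psi>. is_action G \<Psi> \<and> close_action S \<Phi> \<Psi> D \<longrightarrow>
        (\<forall>x. \<exists>y. \<forall>g\<in>carrier G. (\<Psi> g x, \<Phi> g y) \<in> E)))"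
    show "entourage E \<longrightarrow> (\<exists>D. entourage D \<and>
     (\<forall>\<Psi>. is_action G \<Psi> \<and> close_action T \<Phi> \<Psi> D \<longrightarrow>
        (\<forall>x. \<exists>y. \<forall>g\<in>carrier G. (\<Psi> g x, \<Phi> g y) \<in> E)))"
    proof
      assume "entourage E"
      then obtain D where D: "entourage D" "\<forall>\<Psi>. is_action G \<Psi> \<and> close_action S \<Phi> \<Psi> D \<longrightarrow>
        (\<forall>x. \<exists>y. \<forall>g\<in>carrier G. (\<Psi> g x, \<Phi> g y) \<in> E)"
        using H[rule_format, OF \<open>entourage E\<close>] by (elim exE conjE) (rule that, assumption+)
      obtain D' where D': "entourage D'" "\<forall>xs. pseudo_orbit G T \<Phi> D' xs \<longrightarrow> pseudo_orbit G S \<Phi> D xs" "\<forall>\<Psi>. is_action G \<Psi> \<and> close_action T \<Phi> \<Psi> D' \<longrightarrow> close_action S \<Phi> \<Psi> D"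
        using R[OF D(1)] by blast
      show "\<exists>D. entourage D \<and>
     (\<forall>\<Psi>. is_action G \<Psi> \<and> close_action T \<Phi> \<Psi> D \<longrightarrow>
        (\<forall>x. \<exists>y. \<forall>g\<in>carrier G. (\<Psi> g x, \<Phi> g y) \<in> E))"
        using D'(1) mh3[OF D'(3) D(2)] by blast
    qed
  qed
  have 4: "mu_shadowing G S \<mu> \<Phi> \<longrightarrow> mu_shadowing G T \<mu> \<Phi>"
    unfolding mu_shadowing_def
  proof (rule impI, rule allI)
    fix E :: "('a \<times> 'a) set"
    assume H: "\<forall>E. entourage E \<longrightarrow> (\<exists>D B. entourage D \<and>
     B \<in> sets \<mu> \<and> emeasure \<mu> (UNIV - B) = 0 \<and>
     (\<forall>xs. pseudo_orbit G S \<Phi> D xs \<and> xs \<one>\<^bsub>G\<^esub> \<in> B \<longrightarrow> (\<exists>x. shadowed G \<Phi> E xs x)))"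
    show "entourage E \<longrightarrow> (\<exists>D B. entourage D \<and>
     B \<in> sets \<mu> \<and> emeasure \<mu> (UNIV - B) = 0 \<and>
     (\<forall>xs. pseudo_orbit G T \<Phi> D xs \<and> xs \<one>\<^bsub>G\<^esub> \<in> B \<longrightarrow> (\<exists>x. shadowed G \<Phi> E xs x)))"
    proof
      assume "entourage E"
      then obtain D B where D: "entourage D" "B \<in> sets \<mu> \<and> emeasure \<mu> (UNIV - B) = 0"
        "\<forall>xs. pseudo_orbit G S \<Phi> D xs \<and> xs \<one>\<^bsub>G\<^esub> \<in> B \<longrightarrow> (\<exists>x. shadowed G \<Phi> E xs x)"
        using H[rule_format, OF \<open>entourage E\<close>] by (elim exE conjE) (rule that, assumption, rule conjI, assumption+)
      obtain D' where D': "entourage D'" "\<forall>xs. pseudo_orbit G T \<Phi> D' xs \<longrightarrow> pseudo_orbit G S \<Phi> D xs" "\<forall>\<Psi>. is_action G \<Psi> \<and> close_action T \<Phi> \<Psi> D' \<longrightarrow> close_action S \<Phi> \<Psi> D"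
        using R[OF D(1)] by blast
      show "\<exists>D B. entourage D \<and>
     B \<in> sets \<mu> \<and> emeasure \<mu> (UNIV - B) = 0 \<and>
     (\<forall>xs. pseudo_orbit G T \<Phi> D xs \<and> xs \<one>\<^bsub>G\<^esub> \<in> B \<longrightarrow> (\<exists>x. shadowed G \<Phi> E xs x))"
        using D'(1) D(2) mh2[OF D'(2) D(3)] by blast
    qed
  qed
  have 5: "mu_top_stable G S \<mu> \<Phi> \<longrightarrow> mu_top_stable G T \<mu> \<Phi>"
    unfolding mu_top_stable_def
  proof (rule impI, rule allI)
    fix E :: "('a \<times> 'a) set"
    let ?P = "\<lambda>\<Psi>. (\<exists>H. usc H \<and> (\<forall>x. compact (H x)) \<and> dom_sv H \<in> sets \<mu>
             \<and> emeasure \<mu> (UNIV - dom_sv H) = 0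
             \<and> (\<forall>x. emeasure \<mu> (H x) = 0)
             \<and> (\<forall>x. H x \<subseteq> E `` {x})
             \<and> (\<forall>g\<in>carrier G. \<forall>x. \<Phi> g ` H x = H (\<Psi> g x)))"
    assume H: "\<forall>E. entourage E \<longrightarrow> (\<exists>D. entourage D \<and>
     (\<forall>\<Psi>. is_action G \<Psi> \<and> close_action S \<Phi> \<Psi> D \<longrightarrow>
        (\<exists>H. usc H \<and> (\<forall>x. compact (H x)) \<and> dom_sv H \<in> sets \<mu>
             \<and> emeasure \<mu> (UNIV - dom_sv H) = 0
             \<and> (\<forall>x. emeasure \<mu> (H x) = 0)
             \<and> (\<forall>x. H x \<subseteq> E `` {x})
             \<and> (\<forall>g\<in>carrier G. \<forall>x. \<Phi> g ` H x = H (\<Psi> g x)))))"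
    show "entourage E \<longrightarrow> (\<exists>D. entourage D \<and>
     (\<forall>\<Psi>. is_action G \<Psi> \<and> close_action T \<Phi> \<Psi> D \<longrightarrow> ?P \<Psi>))"
    proof
      assume "entourage E"
      then obtain D where D: "entourage D" "\<forall>\<Psi>. is_action G \<Psi> \<and> close_action S \<Phi> \<Psi> D \<longrightarrow> ?P \<Psi>"
        using H[rule_format, OF \<open>entourage E\<close>] by (elim exE conjE) (rule that, assumption+)
      obtain D' where D': "entourage D'" "\<forall>xs. pseudo_orbit G T \<Phi> D' xs \<longrightarrow> pseudo_orbit G S \<Phi> D xs" "\<forall>\<Psi>. is_action G \<Psi> \<and> close_action T \<Phi> \<Psi> D' \<longrightarrow> close_action S \<Phi> \<Psi> D"
        using R[OF D(1)] by blast
      show "\<exists>D. entourage D \<and>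
     (\<forall>\<Psi>. is_action G \<Psi> \<and> close_action T \<Phi> \<Psi> D \<longrightarrow> ?P \<Psi>)"
        using D'(1) mh3[OF D'(3) D(2)] by blast
    qed
  qed
  have 6: "mu_persistent G S \<mu> \<Phi> \<longrightarrow> mu_persistent G T \<mu> \<Phi>"
    unfolding mu_persistent_def
  proof (rule impI, rule allI)
    fix E :: "('a \<times> 'a) set"
    assume H: "\<forall>E. entourage E \<longrightarrow> (\<exists>D B. entourage D \<and>
     B \<in> sets \<mu> \<and> emeasure \<mu> (UNIV - B) = 0 \<and>
     (\<forall>\<Psi>. is_action G \<Psi> \<and> close_action S \<Phi> \<Psi> D \<longrightarrow>
        (\<forall>x\<in>B. \<exists>y. \<forall>g\<in>carrier G. (\<Psi> g x, \<Phi> g y) \<in> E)))"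
    show "entourage E \<longrightarrow> (\<exists>D B. entourage D \<and>
     B \<in> sets \<mu> \<and> emeasure \<mu> (UNIV - B) = 0 \<and>
     (\<forall>\<Psi>. is_action G \<Psi> \<and> close_action T \<Phi> \<Psi> D \<longrightarrow>
        (\<forall>x\<in>B. \<exists>y. \<forall>g\<in>carrier G. (\<Psi> g x, \<Phi> g y) \<in> E)))"
    proof
      assume "entourage E"
      then obtain D B where D: "entourage D" "B \<in> sets \<mu> \<and> emeasure \<mu> (UNIV - B) = 0"
        "\<forall>\<Psi>. is_action G \<Psi> \<and> close_action S \<Phi> \<Psi> D \<longrightarrow>
        (\<forall>x\<in>B. \<exists>y. \<forall>g\<in>carrier G. (\<Psi> g x, \<Phi> g y) \<in> E)"
        using H[rule_format, OF \<open>entourage E\<close>] by (elim exE conjE) (rule that, assumption, rule conjI, assumption+)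
      obtain D' where D': "entourage D'" "\<forall>xs. pseudo_orbit G T \<Phi> D' xs \<longrightarrow> pseudo_orbit G S \<Phi> D xs" "\<forall>\<Psi>. is_action G \<Psi> \<and> close_action T \<Phi> \<Psi> D' \<longrightarrow> close_action S \<Phi> \<Psi> D"
        using R[OF D(1)] by blast
      show "\<exists>D B. entourage D \<and>
     B \<in> sets \<mu> \<and> emeasure \<mu> (UNIV - B) = 0 \<and>
     (\<forall>\<Psi>. is_action G \<Psi> \<and> close_action T \<Phi> \<Psi> D \<longrightarrow>
        (\<forall>x\<in>B. \<exists>y. \<forall>g\<in>carrier G. (\<Psi> g x, \<Phi> g y) \<in> E))"
        using D'(1) D(2) mh3[OF D'(3) D(3)] by blast
    qed
  qed
  show ?thesis using 1 2 3 4 5 6 by blast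
qed

theorem lemma2p5:
  fixes G :: "('g, 'b) monoid_scheme"
    and S T :: "'g set"
    and \<Phi> :: "'g \<Rightarrow> 'a::uniform_space \<Rightarrow> 'a"
    and \<mu> :: "'a measure"
  assumes "group G"
    and "gen_set G S" and "gen_set G T" and "S \<noteq> T"
    and "is_action G \<Phi>"
    and "sets \<mu> = sets borel"
  shows "(has_shadowing G S \<Phi> \<longleftrightarrow> has_shadowing G T \<Phi>)
       \<and> (top_stable G S \<Phi> \<longleftrightarrow> top_stable G T \<Phi>)
       \<and> (persistent G S \<Phi> \<longleftrightarrow> persistent G T \<Phi>)
       \<and> (mu_shadowing G S \<mu> \<Phi> \<longleftrightarrow> mu_shadowing G T \<mu> \<Phi>)
       \<and> (mu_top_stable G S \<mu> \<Phi> \<longleftrightarrow> mu_top_stable G T \<mu> \<Phi>)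
       \<and> (mu_persistent G S \<mu> \<Phi> \<longleftrightarrow> mu_persistent G T \<mu> \<Phi>)"
  using one_dir[OF assms(1,2,3,5), of \<mu>] one_dir[OF assms(1,3,2,5), of \<mu>] by blast

end
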